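(* Let $n\ge2$ and let $Gr_n$ be the grid graph with vertex set $\{0,\dots,2^n\}^2$, edges between points at $\ell_1$-distance 1, and the $\ell_1$-metric. Let $T=\bigcup_{k=0}^{n-2}T_k$ with $T_k=\{1,2,3,4\}^k$ ($T_0=\{\emptyset\}$), and for $t\in T_k$ write $|t|=k$. Then there exist signed measures $\{\mu_t\}_{t\in T}$ on $V(Gr_n)$, each of total mass $0$, such that for every $t\in T$: (P1) $\mathrm{diam}(\mathrm{supp}(\mu_t))\le C_12^{n-|t|}$; (P2) for every $t'\in T\setminus\{t\}$, $\mathrm{dist}(\mathrm{supp}(\mu_t),\mathrm{supp}(\mu_{t'}))\ge C_2^{-1}2^{n-\max(|t|,|t'|)}$; (P3) $\|\mu_t\|_{\mathrm{TC}}\ge C_3^{-1}4^{-|t|}$; (P4) for every $A\subseteq V(Gr_n)$, $|\mu_t(A)|\le C_4\min\{2^{-n-1-|t|},\,4^{-n}(\mathrm{diam}(A)+1)\}$; (P5) there is $u\in V(Gr_n)$ such that $\mathrm{supp}(\mu_t)\cup\{u\}$ induces a connected subgraph of $Gr_n$; with $C_1=\tfrac12$, $C_2=4$, $C_3=16$, $C_4=1$.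
   Context: $\mathrm{supp}(\mu)=\{v:\mu(\{v\})\ne0\}$; diam and dist are with respect to the $\ell_1$-metric on $V(Gr_n)$. $\|\mu\|_{\mathrm{TC}}=\inf\sum_ia_i d(x_i,y_i)$ over representations $\mu=\sum_ia_i(\delta_{x_i}-\delta_{y_i})$ with $a_i\ge0$. *)

theory Defs
  imports Complex_Main
begin

type_synonym vert = "int \<times> int"

definition grid_V :: "nat \<Rightarrow> vert set" where
  "grid_V n = {0..2^n} \<times> {0..2^n}"

definition l1 :: "vert \<Rightarrow> vert \<Rightarrow> real" where
  "l1 p q = real_of_int (\<bar>fst p - fst q\<bar> + \<bar>snd p - snd q\<bar>)"

definition grid_adj :: "vert \<Rightarrow> vert \<Rightarrow> bool" where
  "grid_adj p q \<longleftrightarrow> l1 p q = 1"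

text \<open>Signed measures on the finite set V(Gr_n) are represented by their
  point masses mu :: vert => real (vanishing off V(Gr_n)); mu(A) = sum over A.\<close>
definition meas :: "(vert \<Rightarrow> real) \<Rightarrow> vert set \<Rightarrow> real" where
  "meas mu A = (\<Sum>v\<in>A. mu v)"

definition supp :: "(vert \<Rightarrow> real) \<Rightarrow> vert set" where
  "supp mu = {v. mu v \<noteq> 0}"

definition diam :: "vert set \<Rightarrow> real" where
  "diam S = (if S = {} then 0 else Max {l1 x y | x y. x \<in> S \<and> y \<in> S})"

definition setdist :: "vert set \<Rightarrow> vert set \<Rightarrow> real" where
  "setdist S S' = (if S = {} \<or> S' = {} then 0 else Min {l1 x y | x y. x \<in> S \<and> y \<in> S'})"

definition tc_norm :: "nat \<Rightarrow> (vert \<Rightarrow> real) \<Rightarrow> real" where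
  "tc_norm n mu = Inf {(\<Sum>i<m. a i * l1 (x i) (y i)) | (m::nat) (a::nat \<Rightarrow> real) (x::nat \<Rightarrow> vert) (y::nat \<Rightarrow> vert).
      (\<forall>i<m. a i \<ge> 0 \<and> x i \<in> grid_V n \<and> y i \<in> grid_V n) \<and>
      (\<forall>v. mu v = (\<Sum>i<m. a i * ((if v = x i then 1 else 0) - (if v = y i then 1 else 0))))}"

definition induces_connected :: "vert set \<Rightarrow> bool" where
  "induces_connected W \<longleftrightarrow> (\<forall>p\<in>W. \<forall>q\<in>W. \<exists>ps. ps \<noteq> [] \<and> hd ps = p \<and> last ps = q \<and>
      set ps \<subseteq> W \<and> (\<forall>i. Suc i < length ps \<longrightarrow> grid_adj (ps ! i) (ps ! Suc i)))"

definition index_T :: "nat \<Rightarrow> nat list set" where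
  "index_T n = {t. set t \<subseteq> {1,2,3,4} \<and> length t \<le> n - 2}"

end

theory Submission
  imports Defs
begin


fun enc :: "nat list \<Rightarrow> nat" where
  "enc [] = 0" | "enc (d # t) = (d - 1) + 4 * enc t"

lemma enc_bound: "set t \<subseteq> {1,2,3,4} \<Longrightarrow> enc t < 4 ^ length t"
proof (induction t)
  case Nil then show ?case by simp
next
  case (Cons d t)
  then have "d - 1 < 4" "enc t < 4 ^ length t" by auto
  then show ?case by simp
qed

lemma enc_inj: "set t \<subseteq> {1,2,3,4} \<Longrightarrow> set t' \<subseteq> {1,2,3,4} \<Longrightarrow> length t = length t'
   \<Longrightarrow> enc t = enc t' \<Longrightarrow> t = t'"
proof (induction t arbitrary: t')
  case Nil then show ?case by simp
next
  case (Cons d t)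
  then obtain d' u where t': "t' = d' # u" by (cases t') auto
  have h1: "d - 1 < 4" "d' - 1 < 4" "d \<ge> 1" "d' \<ge> 1" using Cons.prems t' by auto
  have "(d - 1) + 4 * enc t = (d' - 1) + 4 * enc u" using Cons.prems t' by simp
  then have "d - 1 = d' - 1" "enc t = enc u" using h1 by presburger+
  then have "d = d'" "t = u" using h1 Cons t' by auto
  then show ?case using t' by simp
qed

definition "w n = ((1::real)/4) ^ n"

lemma meas_if:
  assumes "finite A"
  shows "meas (\<lambda>v. c * ((if v \<in> S1 then 1 else 0) - (if v \<in> S2 then 1 else 0))) A
         = c * (real (card (A \<inter> S1)) - real (card (A \<inter> S2)))"
proof -
  have e: "\<And>S. (\<Sum>v\<in>A. (if v \<in> S then 1 else 0::real)) = real (card (A \<inter> S))"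
    using assms by (simp add: sum.If_cases)
  show ?thesis unfolding meas_def
    by (simp add: sum_distrib_left[symmetric] sum_subtractf e)
qed

lemma img_eq: "{l1 x y | x y. x \<in> A \<and> y \<in> B} = (\<lambda>p. l1 (fst p) (snd p)) ` (A \<times> B)"
  by force

lemma diam_ge: assumes "finite A" "x \<in> A" "y \<in> A" shows "l1 x y \<le> diam A"
proof -
  have "A \<noteq> {}" using assms by auto
  moreover have "l1 x y \<in> (\<lambda>p. l1 (fst p) (snd p)) ` (A \<times> A)" using assms by force
  ultimately show ?thesis unfolding diam_def img_eq using assms by (simp add: Max_ge)
qed

lemma diam_le: assumes "finite S" "\<forall>x\<in>S. \<forall>y\<in>S. l1 x y \<le> D" "0 \<le> D" shows "diam S \<le> D"
  unfolding diam_def img_eq using assms by (auto simp: Max_le_iff)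

lemma setdist_ge: assumes "finite S" "finite S'" "S \<noteq> {}" "S' \<noteq> {}"
  "\<forall>x\<in>S. \<forall>y\<in>S'. D \<le> l1 x y" shows "D \<le> setdist S S'"
  unfolding setdist_def img_eq using assms by (auto simp: Min_ge_iff)

lemma diam_nonneg: "finite A \<Longrightarrow> 0 \<le> diam A"
  by (metis all_not_in_conv diam_def diam_ge l1_def order.refl diff_self abs_zero add_0 of_int_0 order_refl)

lemma card_line_le:
  assumes "finite A" "B \<subseteq> A" "B \<subseteq> {X} \<times> UNIV"
  shows "real (card B) \<le> diam A + 1"
proof (cases "B = {}")
  case True then show ?thesis using diam_nonneg[OF assms(1)] by simp
next
  case False
  have fB: "finite B" using assms finite_subset by blast
  define lo where "lo = Min (snd ` B)"
  define hi where "hi = Max (snd ` B)"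
  have "lo \<in> snd ` B" "hi \<in> snd ` B" unfolding lo_def hi_def using fB False by auto
  then have m: "(X, lo) \<in> B" "(X, hi) \<in> B" using assms(3) by auto
  have sub: "B \<subseteq> {X} \<times> {lo..hi}"
  proof
    fix v assume "v \<in> B"
    moreover have "snd v \<in> snd ` B" using \<open>v \<in> B\<close> by simp
    ultimately show "v \<in> {X} \<times> {lo..hi}" using assms(3) fB unfolding lo_def hi_def
      by (cases v) (auto intro: Min_le Max_ge)
  qed
  have "card B \<le> card ({X} \<times> {lo..hi})" using sub by (intro card_mono) auto
  also have "\<dots> = nat (hi - lo + 1)" by simp
  finally have "card B \<le> nat (hi - lo + 1)" .
  moreover have "lo \<le> hi" using m sub by auto
  ultimately have "int (card B) \<le> hi - lo + 1" by linarith
  then have c: "real (card B) \<le> real_of_int (hi - lo + 1)" by (metis of_int_le_iff of_int_of_nat_eq)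
  have "l1 (X, hi) (X, lo) \<le> diam A" using diam_ge[OF assms(1)] m assms(2) by blast
  moreover have "lo \<le> hi" using m sub by auto
  ultimately have "real_of_int (hi - lo) \<le> diam A" by (simp add: l1_def)
  then show ?thesis using c by simp
qed


lemma conn_seg: "induces_connected ({X} \<times> {lo..<hi})"
  unfolding induces_connected_def
proof (intro ballI)
  fix p q assume p: "p \<in> {X} \<times> {lo..<hi}" and q: "q \<in> {X} \<times> {lo..<hi}"
  obtain a where pa: "p = (X, a)" "lo \<le> a" "a < hi" using p by auto
  obtain b where qb: "q = (X, b)" "lo \<le> b" "b < hi" using q by auto
  define d :: int where "d = (if a \<le> b then 1 else -1)"
  define L where "L = nat \<bar>b - a\<bar>"
  define ps where "ps = map (\<lambda>k. (X, a + d * int k)) [0..<L+1]"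
  have len: "length ps = L + 1" unfolding ps_def by simp
  have "ps \<noteq> []" unfolding ps_def by simp
  moreover have "hd ps = p" unfolding ps_def pa by (simp add: hd_map upt_conv_Cons del: upt_Suc)
  moreover have "last ps = q"
  proof -
    have "last ps = ps ! L" using len by (simp add: last_conv_nth \<open>ps \<noteq> []\<close>)
    also have "\<dots> = (X, a + d * int L)" unfolding ps_def by (simp del: upt_Suc)
    also have "\<dots> = q" unfolding qb d_def L_def by auto
    finally show ?thesis .
  qed
  moreover have "set ps \<subseteq> {X} \<times> {lo..<hi}"
  proof
    fix v assume "v \<in> set ps"
    then obtain k where k: "k \<le> L" "v = (X, a + d * int k)" unfolding ps_def
      by (auto simp del: upt_Suc simp add: less_Suc_eq_le)
    then show "v \<in> {X} \<times> {lo..<hi}" using pa qb unfolding d_def L_def by auto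
  qed
  moreover have "\<forall>i. Suc i < length ps \<longrightarrow> grid_adj (ps ! i) (ps ! Suc i)"
  proof (intro allI impI)
    fix i assume "Suc i < length ps"
    then have "ps ! i = (X, a + d * int i)" "ps ! Suc i = (X, a + d * int (Suc i))"
      unfolding ps_def by (simp_all del: upt_Suc)
    then show "grid_adj (ps ! i) (ps ! Suc i)" unfolding grid_adj_def l1_def d_def
      by (simp add: algebra_simps)
  qed
  ultimately show "\<exists>ps. ps \<noteq> [] \<and> hd ps = p \<and> last ps = q \<and> set ps \<subseteq> {X} \<times> {lo..<hi} \<and>
      (\<forall>i. Suc i < length ps \<longrightarrow> grid_adj (ps ! i) (ps ! Suc i))" by blast
qed


lemma pw:
  fixes g :: "vert \<Rightarrow> real"
  assumes r: "\<forall>v. mu v = (\<Sum>i<m. a i * ((if v = x i then 1 else 0) - (if v = y i then 1 else 0)))"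
  shows "mu v * g v = (\<Sum>i<m. a i * ((if v = x i then g v else 0) - (if v = y i then g v else 0)))"
proof -
  have "mu v * g v = (\<Sum>i<m. a i * ((if v = x i then 1 else 0) - (if v = y i then 1 else 0)) * g v)"
  proof -
    have "mu v = (\<Sum>i<m. a i * ((if v = x i then 1 else 0) - (if v = y i then 1 else 0)))"
      using r by blast
    then show ?thesis by (simp only: sum_distrib_right)
  qed
  also have "\<dots> = (\<Sum>i<m. a i * ((if v = x i then g v else 0) - (if v = y i then g v else 0)))"
    by (rule sum.cong[OF refl]) (simp add: algebra_simps)
  finally show ?thesis .
qed

lemma dl:
  fixes g :: "vert \<Rightarrow> real"
  assumes "finite U" "p \<in> U" "q \<in> U"
  shows "(\<Sum>v\<in>U. c * ((if v = p then g v else 0) - (if v = q then g v else 0))) = c * (g p - g q)"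
proof -
  have "(\<Sum>v\<in>U. c * ((if v = p then g v else 0) - (if v = q then g v else 0)))
     = c * ((\<Sum>v\<in>U. (if v = p then g v else 0)) - (\<Sum>v\<in>U. (if v = q then g v else 0)))"
    by (simp only: right_diff_distrib sum_subtractf sum_distrib_left)
  also have "\<dots> = c * (g p - g q)" using assms by (simp add: sum.delta')
  finally show ?thesis .
qed


lemma tc_lower:
  assumes ne: "\<exists>(m::nat) (a::nat \<Rightarrow> real) x y. (\<forall>i<m. a i \<ge> 0 \<and> x i \<in> grid_V n \<and> y i \<in> grid_V n) \<and>
      (\<forall>v. mu v = (\<Sum>i<m. a i * ((if v = x i then 1 else 0) - (if v = y i then 1 else 0))))"
  shows "(\<Sum>v\<in>grid_V n. mu v * real_of_int (- snd v)) \<le> tc_norm n mu"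
proof -
  let ?g = "\<lambda>v::vert. real_of_int (- snd v)"
  define P where "P = (\<lambda>(m::nat) (a::nat \<Rightarrow> real) (x::nat \<Rightarrow> vert) (y::nat \<Rightarrow> vert).
      (\<forall>i<m. a i \<ge> 0 \<and> x i \<in> grid_V n \<and> y i \<in> grid_V n) \<and>
      (\<forall>v. mu v = (\<Sum>i<m. a i * ((if v = x i then 1 else 0) - (if v = y i then 1 else 0)))))"
  have fin: "finite (grid_V n)" unfolding grid_V_def by simp
  have key: "(\<Sum>v\<in>grid_V n. mu v * ?g v) \<le> (\<Sum>i<m. a i * l1 (x i) (y i))" if "P m a x y" for m a x y
  proof -
    have hr: "(\<forall>i<m. a i \<ge> 0 \<and> x i \<in> grid_V n \<and> y i \<in> grid_V n) \<and>
      (\<forall>v. mu v = (\<Sum>i<m. a i * ((if v = x i then 1 else 0) - (if v = y i then 1 else 0))))"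
      using that unfolding P_def .
    note h = conjunct1[OF hr] and r = conjunct2[OF hr]
    have "(\<Sum>v\<in>grid_V n. mu v * ?g v)
      = (\<Sum>v\<in>grid_V n. \<Sum>i<m. a i * ((if v = x i then ?g v else 0) - (if v = y i then ?g v else 0)))"
      by (rule sum.cong[OF refl], rule pw[OF r])
    also have "\<dots> = (\<Sum>i<m. \<Sum>v\<in>grid_V n. a i * ((if v = x i then ?g v else 0) - (if v = y i then ?g v else 0)))"
      by (rule sum.swap)
    also have "\<dots> = (\<Sum>i<m. a i * (?g (x i) - ?g (y i)))"
    proof (rule sum.cong[OF refl])
      fix i assume "i \<in> {..<m}"
      then have xi: "x i \<in> grid_V n" and yi: "y i \<in> grid_V n" using h by auto
      show "(\<Sum>v\<in>grid_V n. a i * ((if v = x i then ?g v else 0) - (if v = y i then ?g v else 0)))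
          = a i * (?g (x i) - ?g (y i))"
        by (rule dl[OF fin xi yi])
    qed
    also have "\<dots> \<le> (\<Sum>i<m. a i * l1 (x i) (y i))"
    proof (rule sum_mono)
      fix i assume "i \<in> {..<m}"
      then have "a i \<ge> 0" using h by auto
      moreover have "?g (x i) - ?g (y i) \<le> l1 (x i) (y i)" unfolding l1_def by simp
      ultimately show "a i * (?g (x i) - ?g (y i)) \<le> a i * l1 (x i) (y i)"
        by (rule mult_left_mono[rotated])
    qed
    finally show ?thesis .
  qed
  have eq: "tc_norm n mu = Inf {(\<Sum>i<m. a i * l1 (x i) (y i)) | m a x y. P m a x y}"
    unfolding tc_norm_def P_def by (rule refl)
  have P0: "\<exists>m a x y. P m a x y" unfolding P_def by (rule ne)
  have ne': "{(\<Sum>i<m. a i * l1 (x i) (y i)) | m a x y. P m a x y} \<noteq> {}"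
    using P0 by blast
  show ?thesis unfolding eq
    by (rule cInf_greatest[OF ne']) (use key in blast)
qed


definition museg :: "real \<Rightarrow> int \<Rightarrow> int \<Rightarrow> int \<Rightarrow> vert \<Rightarrow> real" where
  "museg c X lo q v = c * ((if v \<in> {X} \<times> {lo..<lo+q} then 1 else 0)
      - (if v \<in> {X} \<times> {lo+q..<lo+2*q} then 1 else 0))"

lemma sum_line: "(\<Sum>i<nat q. (if v = (X, b + int i) then 1 else 0::real))
   = (if v \<in> {X} \<times> {b..<b+q} then 1 else 0)"
proof (cases "v \<in> {X} \<times> {b..<b+q}")
  case True
  then obtain y where v: "v = (X, y)" "b \<le> y" "y < b + q" by auto
  have "(\<Sum>i<nat q. (if v = (X, b + int i) then 1 else 0::real))
     = (\<Sum>i<nat q. (if i = nat (y - b) then 1 else 0::real))"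
    by (rule sum.cong) (use v in auto)
  also have "\<dots> = 1" using v by (simp add: sum.delta')
  finally show ?thesis using True by simp
next
  case False
  have "(\<Sum>i<nat q. (if v = (X, b + int i) then 1 else 0::real)) = 0"
    by (rule sum.neutral) (use False in auto)
  then show ?thesis using False by simp
qed

lemma museg_repr:
  assumes "0 \<le> c" "0 \<le> q" "{X} \<times> {lo..<lo+2*q} \<subseteq> grid_V n"
  shows "\<exists>(m::nat) (a::nat \<Rightarrow> real) x y. (\<forall>i<m. a i \<ge> 0 \<and> x i \<in> grid_V n \<and> y i \<in> grid_V n) \<and>
      (\<forall>v. museg c X lo q v = (\<Sum>i<m. a i * ((if v = x i then 1 else 0) - (if v = y i then 1 else 0))))"
proof -
  define x where "x = (\<lambda>i::nat. (X, lo + int i))"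
  define y where "y = (\<lambda>i::nat. (X, (lo + q) + int i))"
  have A: "\<forall>i<nat q. (\<lambda>_. c) i \<ge> 0 \<and> x i \<in> grid_V n \<and> y i \<in> grid_V n"
    using assms unfolding x_def y_def by auto
  have B: "\<forall>v. museg c X lo q v = (\<Sum>i<nat q. (\<lambda>_. c) i * ((if v = x i then 1 else 0) - (if v = y i then 1 else 0)))"
  proof
    fix v
    have s1: "(\<Sum>i<nat q. (if v = x i then 1 else 0::real)) = (if v \<in> {X} \<times> {lo..<lo+q} then 1 else 0)"
      unfolding x_def by (rule sum_line)
    have s2: "(\<Sum>i<nat q. (if v = y i then 1 else 0::real)) = (if v \<in> {X} \<times> {lo+q..<lo+q+q} then 1 else 0)"
      unfolding y_def by (rule sum_line)
    have "(\<Sum>i<nat q. (\<lambda>_. c) i * ((if v = x i then 1 else 0) - (if v = y i then 1 else 0)))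
       = c * ((\<Sum>i<nat q. (if v = x i then 1 else 0::real)) - (\<Sum>i<nat q. (if v = y i then 1 else 0::real)))"
      by (simp only: sum_distrib_left[symmetric] sum_subtractf)
    also have "\<dots> = museg c X lo q v" unfolding s1 s2 museg_def
      by (simp only: mult_2 add.assoc)
    finally show "museg c X lo q v = (\<Sum>i<nat q. (\<lambda>_. c) i * ((if v = x i then 1 else 0) - (if v = y i then 1 else 0)))" by (rule sym)
  qed
  show ?thesis by (rule exI[of _ "nat q"], rule exI[of _ "\<lambda>_. c"], rule exI[of _ x], rule exI[of _ y], rule conjI[OF A B])
qed

lemma museg_sum:
  assumes "0 \<le> q" "{X} \<times> {lo..<lo+2*q} \<subseteq> U" "finite U"
  shows "(\<Sum>v\<in>U. museg c X lo q v * real_of_int (- snd v)) = c * real_of_int (q * q)"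
proof -
  let ?g = "\<lambda>v::vert. real_of_int (- snd v)"
  let ?A = "{X} \<times> {lo..<lo+q}" and ?B = "{X} \<times> {lo+q..<lo+2*q}"
  have sA: "?A \<subseteq> U" and sB: "?B \<subseteq> U" using assms by auto
  have e: "\<And>S. S \<subseteq> U \<Longrightarrow> (\<Sum>v\<in>U. (if v \<in> S then ?g v else 0)) = (\<Sum>v\<in>S. ?g v)"
    using assms(3) by (simp add: sum.If_cases Int_absorb1 inf.absorb2)
  have line: "\<And>I. (\<Sum>v\<in>{X} \<times> I. ?g v) = (\<Sum>y\<in>I. real_of_int (- y))"
  proof -
    fix I :: "int set"
    have "{X} \<times> I = (\<lambda>y. (X, y)) ` I" by auto
    moreover have "inj_on (\<lambda>y. (X, y)) I" by (auto simp: inj_on_def)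
    ultimately show "(\<Sum>v\<in>{X} \<times> I. ?g v) = (\<Sum>y\<in>I. real_of_int (- y))"
      by (simp add: sum.reindex)
  qed
  have shift: "(\<Sum>y\<in>{lo+q..<lo+2*q}. real_of_int (- y)) = (\<Sum>y\<in>{lo..<lo+q}. real_of_int (- y)) - real_of_int (q*q)"
  proof -
    have "{lo+q..<lo+2*q} = (\<lambda>y. y + q) ` {lo..<lo+q}"
      by (auto simp: image_iff intro!: bexI[where x="_ - q"])
    moreover have "inj_on (\<lambda>y. y + q) {lo..<lo+q}" by (auto simp: inj_on_def)
    ultimately have "(\<Sum>y\<in>{lo+q..<lo+2*q}. real_of_int (- y)) = (\<Sum>y\<in>{lo..<lo+q}. real_of_int (- (y + q)))"
      by (metis (no_types, lifting) sum.reindex_cong)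
    also have "\<dots> = (\<Sum>y\<in>{lo..<lo+q}. real_of_int (- y) - real_of_int q)" by simp
    also have "\<dots> = (\<Sum>y\<in>{lo..<lo+q}. real_of_int (- y)) - real_of_int (q*q)"
      using assms(1) by (simp add: sum_subtractf)
    finally show ?thesis .
  qed
  have "(\<Sum>v\<in>U. museg c X lo q v * ?g v) = c * ((\<Sum>v\<in>U. (if v \<in> ?A then ?g v else 0)) - (\<Sum>v\<in>U. (if v \<in> ?B then ?g v else 0)))"
  proof -
    have "(\<Sum>v\<in>U. museg c X lo q v * ?g v) = (\<Sum>v\<in>U. c * ((if v \<in> ?A then ?g v else 0) - (if v \<in> ?B then ?g v else 0)))"
      by (rule sum.cong) (auto simp: museg_def)
    also have "\<dots> = c * ((\<Sum>v\<in>U. (if v \<in> ?A then ?g v else 0)) - (\<Sum>v\<in>U. (if v \<in> ?B then ?g v else 0)))"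
      by (simp only: sum_distrib_left[symmetric] sum_subtractf)
    finally show ?thesis .
  qed
  also have "\<dots> = c * real_of_int (q * q)"
    unfolding e[OF sA] e[OF sB] line shift by simp
  finally show ?thesis .
qed


lemma sep_depth:
  fixes c c' :: int
  assumes "p' < p"
  shows "(2::int)^p' \<le> \<bar>2^(p+1)*(2*c+1) - 2^(p'+1)*(2*c'+1)\<bar>"
proof -
  obtain d where d: "p = p' + Suc d" using assms less_iff_Suc_add by auto
  have e: "(2::int)^(p+1) = 2^(p'+1) * (2 * 2^d)" unfolding d by (simp add: power_add)
  define z where "z = (2 * 2^d) * (2*c+1) - (2*c'+1)"
  have "odd z" unfolding z_def by simp
  then have "z \<noteq> 0" by auto
  then have z1: "1 \<le> \<bar>z\<bar>" by simp
  have "2^(p+1)*(2*c+1) - 2^(p'+1)*(2*c'+1) = (2::int)^(p'+1) * z"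
    unfolding e z_def by (simp add: algebra_simps)
  then have "\<bar>2^(p+1)*(2*c+1) - 2^(p'+1)*(2*c'+1)\<bar> = (2::int)^(p'+1) * \<bar>z\<bar>"
    by (simp add: abs_mult)
  moreover have "(2::int)^(p'+1) * 1 \<le> 2^(p'+1) * \<bar>z\<bar>" using z1 by (intro mult_left_mono) auto
  moreover have "(2::int)^p' \<le> 2^(p'+1)" by simp
  ultimately show ?thesis by linarith
qed


definition qq :: "nat \<Rightarrow> nat list \<Rightarrow> int" where "qq n t = 2 ^ (n - length t - 2)"
definition colc :: "nat list \<Rightarrow> int" where "colc t = int (enc t mod 2 ^ length t)"
definition rowc :: "nat list \<Rightarrow> int" where "rowc t = int (enc t div 2 ^ length t)"
definition Xc :: "nat \<Rightarrow> nat list \<Rightarrow> int" where "Xc n t = 2 * qq n t * (2 * colc t + 1)"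
definition loc :: "nat \<Rightarrow> nat list \<Rightarrow> int" where "loc n t = 4 * qq n t * rowc t + qq n t"
definition Seg :: "nat \<Rightarrow> nat list \<Rightarrow> vert set" where "Seg n t = {Xc n t} \<times> {loc n t..<loc n t + 2 * qq n t}"
definition muT :: "nat \<Rightarrow> nat list \<Rightarrow> vert \<Rightarrow> real" where
  "muT n t = museg ((1/4)^n) (Xc n t) (loc n t) (qq n t)"

lemma col_row:
  assumes "set t \<subseteq> {1,2,3,4}"
  shows "0 \<le> colc t" "colc t < 2 ^ length t" "0 \<le> rowc t" "rowc t < 2 ^ length t"
    "enc t = nat (colc t) + 2 ^ length t * nat (rowc t)"
proof -
  have b: "enc t < 2 ^ length t * 2 ^ length t"
    using enc_bound[OF assms] by (simp add: power_mult_distrib[symmetric])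
  show "0 \<le> colc t" "0 \<le> rowc t" unfolding colc_def rowc_def by auto
  show "colc t < 2 ^ length t" unfolding colc_def
    by simp
  have "enc t div 2 ^ length t < 2 ^ length t" using b by (simp add: div_less_iff_less_mult mult.commute)
  then show "rowc t < 2 ^ length t" unfolding rowc_def
    by (metis of_nat_less_iff of_nat_numeral of_nat_power)
  show "enc t = nat (colc t) + 2 ^ length t * nat (rowc t)" unfolding colc_def rowc_def
    by simp
qed

lemma qq_facts:
  assumes "length t + 2 \<le> n"
  shows "1 \<le> qq n t" "4 * qq n t * 2 ^ length t = 2 ^ n"
    "real_of_int (qq n t) = 2 ^ (n - length t - 2)"
proof -
  show "1 \<le> qq n t" unfolding qq_def by simp
  have "n = (n - length t - 2) + 2 + length t" using assms by simp
  then have "(2::int) ^ n = 2 ^ (n - length t - 2) * 2^2 * 2 ^ length t"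
    by (metis power_add)
  then show "4 * qq n t * 2 ^ length t = 2 ^ n" unfolding qq_def by (simp add: algebra_simps)
  show "real_of_int (qq n t) = 2 ^ (n - length t - 2)" unfolding qq_def by simp
qed


lemma idx: assumes "t \<in> index_T n" "2 \<le> n" shows "set t \<subseteq> {1,2,3,4}" "length t + 2 \<le> n"
  using assms unfolding index_T_def by auto

lemma seg_grid:
  assumes "t \<in> index_T n" "2 \<le> n"
  shows "Seg n t \<subseteq> grid_V n"
proof -
  note i = idx[OF assms]
  note cr = col_row[OF i(1)] and qf = qq_facts[OF i(2)]
  define q where "q = qq n t"
  define Q where "Q = (2::int) ^ length t"
  have q1: "1 \<le> q" and qQ: "4 * q * Q = 2 ^ n" using qf unfolding q_def Q_def by auto
  have c: "0 \<le> colc t" "colc t \<le> Q - 1" "0 \<le> rowc t" "rowc t \<le> Q - 1" using cr unfolding Q_def by auto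
  have m1: "4 * q * colc t \<le> 4 * q * (Q - 1)" using c q1 by (intro mult_left_mono) auto
  have m2: "4 * q * rowc t \<le> 4 * q * (Q - 1)" using c q1 by (intro mult_left_mono) auto
  have m3: "0 \<le> 4 * q * colc t" "0 \<le> 4 * q * rowc t" using c q1 by auto
  have X: "Xc n t = 4 * q * colc t + 2 * q" unfolding Xc_def q_def by (simp add: algebra_simps)
  have L: "loc n t = 4 * q * rowc t + q" unfolding loc_def q_def by simp
  have "4 * q * (Q - 1) = 2 ^ n - 4 * q" using qQ by (simp add: algebra_simps)
  then show ?thesis unfolding Seg_def grid_V_def X L q_def[symmetric]
    using m1 m2 m3 q1 by auto
qed

lemma supp_muT:
  assumes "1 \<le> qq n t"
  shows "supp (muT n t) = Seg n t"
  unfolding supp_def muT_def museg_def Seg_def using assms by auto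

lemma l1_ge: "real_of_int \<bar>fst a - fst b\<bar> \<le> l1 a b" "real_of_int \<bar>snd a - snd b\<bar> \<le> l1 a b"
  unfolding l1_def by auto


lemma Xc_pow: "length t + 2 \<le> n \<Longrightarrow> Xc n t = 2 ^ ((n - length t - 2) + 1) * (2 * colc t + 1)"
  unfolding Xc_def qq_def by simp

lemma sep_int:
  assumes t: "t \<in> index_T n" and t': "t' \<in> index_T n" and n: "2 \<le> n" and ne: "t \<noteq> t'"
    and a: "a \<in> Seg n t" and b: "b \<in> Seg n t'"
  shows "(2::int) ^ (n - max (length t) (length t') - 2) \<le> \<bar>fst a - fst b\<bar>
       \<or> (2::int) ^ (n - max (length t) (length t') - 2) \<le> \<bar>snd a - snd b\<bar>"
proof -
  note i = idx[OF t n] and i' = idx[OF t' n]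
  have fa: "fst a = Xc n t" and fb: "fst b = Xc n t'" using a b unfolding Seg_def by auto
  consider (lt) "length t < length t'" | (gt) "length t' < length t" | (eq) "length t = length t'"
    by linarith
  then show ?thesis
  proof cases
    case lt
    have "n - length t' - 2 < n - length t - 2" using lt i' by simp
    from sep_depth[OF this, of "colc t" "colc t'"]
    have "(2::int) ^ (n - length t' - 2) \<le> \<bar>fst a - fst b\<bar>"
      unfolding fa fb Xc_pow[OF i(2)] Xc_pow[OF i'(2)] .
    then show ?thesis using lt by (simp add: max_def)
  next
    case gt
    have "n - length t - 2 < n - length t' - 2" using gt i by simp
    from sep_depth[OF this, of "colc t'" "colc t"]
    have "(2::int) ^ (n - length t - 2) \<le> \<bar>fst b - fst a\<bar>"
      unfolding fa fb Xc_pow[OF i(2)] Xc_pow[OF i'(2)] .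
    then show ?thesis using gt by (simp add: max_def abs_minus_commute)
  next
    case eq
    define q where "q = qq n t"
    have qq': "qq n t' = q" unfolding q_def qq_def eq ..
    have q1: "1 \<le> q" using qq_facts[OF i(2)] unfolding q_def by simp
    have pw: "(2::int) ^ (n - max (length t) (length t') - 2) = q" unfolding q_def qq_def eq by simp
    have "enc t \<noteq> enc t'" using enc_inj[OF i(1) i'(1) eq] ne by blast
    then have "colc t \<noteq> colc t' \<or> rowc t \<noteq> rowc t'"
      using col_row(5)[OF i(1)] col_row(5)[OF i'(1)] eq by auto
    then show ?thesis
    proof
      assume c: "colc t \<noteq> colc t'"
      have "fst a - fst b = 4 * q * (colc t - colc t')"
        unfolding fa fb Xc_def q_def[symmetric] qq' by (simp add: algebra_simps)
      moreover have "1 \<le> \<bar>colc t - colc t'\<bar>" using c by linarith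
      ultimately have "4 * q * 1 \<le> \<bar>fst a - fst b\<bar>"
        using q1 by (simp add: abs_mult)
      then show ?thesis unfolding pw using q1 by simp
    next
      assume r: "rowc t \<noteq> rowc t'"
      have ya: "4 * q * rowc t + q \<le> snd a" "snd a < 4 * q * rowc t + 3 * q"
        using a unfolding Seg_def loc_def q_def by auto
      have yb: "4 * q * rowc t' + q \<le> snd b" "snd b < 4 * q * rowc t' + 3 * q"
        using b unfolding Seg_def loc_def qq' by auto
      have "rowc t + 1 \<le> rowc t' \<or> rowc t' + 1 \<le> rowc t" using r by linarith
      then have "4 * q * (rowc t + 1) \<le> 4 * q * rowc t' \<or> 4 * q * (rowc t' + 1) \<le> 4 * q * rowc t"
        using q1 by (auto intro: mult_left_mono)
      then have "q \<le> \<bar>snd a - snd b\<bar>" using ya yb by (auto simp: algebra_simps)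
      then show ?thesis unfolding pw by simp
    qed
  qed
qed

lemma sep_real:
  assumes t: "t \<in> index_T n" and t': "t' \<in> index_T n" and n: "2 \<le> n" and ne: "t \<noteq> t'"
    and a: "a \<in> Seg n t" and b: "b \<in> Seg n t'"
  shows "(1/4) * 2 ^ (n - max (length t) (length t')) \<le> l1 a b"
proof -
  let ?M = "max (length t) (length t')"
  have "?M + 2 \<le> n" using idx[OF t n] idx[OF t' n] by simp
  then have nd: "n - ?M = (n - ?M - 2) + 2" by simp
  have e: "(1/4) * (2::real) ^ (n - ?M) = 2 ^ (n - ?M - 2)"
    by (subst nd) (simp only: power_add, simp)
  have "real_of_int ((2::int) ^ (n - ?M - 2)) \<le> l1 a b"
    using sep_int[OF assms] l1_ge[of a b] by (meson of_int_le_iff order_trans)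
  then show ?thesis unfolding e by simp
qed


lemma four_pow: "(1/4::real)^m = (1/2)^m * (1/2)^m"
  by (simp add: power_mult_distrib[symmetric])
lemma half_two: "(1/2::real)^p * 2^p = 1"
  by (simp add: power_mult_distrib[symmetric])
lemma arith1: "(1/4::real)^(k+2+p) * 2^p * 2^p = (1/16) * (1/4)^k"
proof -
  have "(1/4::real)^(k+2+p) * 2^p * 2^p = (1/4)^k * (1/16) * (((1/2)^p * 2^p) * ((1/2)^p * 2^p))"
    by (simp add: power_add four_pow[of p] algebra_simps)
  then show ?thesis by (simp add: half_two)
qed
lemma arith2: "(1/4::real)^(k+2+p) * 2^p \<le> (1/2)^((k+2+p)+1+k)"
proof -
  have "(1/4::real)^(k+2+p) * 2^p = (1/2)^k * (1/2)^k * (1/16) * (1/2)^p * ((1/2)^p * 2^p)"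
    by (simp add: power_add four_pow algebra_simps)
  also have "\<dots> = (1/2)^k * (1/2)^k * (1/16) * (1/2)^p" by (simp add: half_two)
  also have "\<dots> \<le> (1/2)^((k+2+p)+1+k)" by (simp add: power_add algebra_simps)
  finally show ?thesis .
qed
lemma arith3: "2 * (2::real)^p \<le> (1/2) * 2^(p+2)"
  by (simp add: power_add)


lemma card_seg: "card ({X} \<times> {a..<a + (q::int)}) = nat q"
  by (simp add: card_cartesian_product)

lemma main_t:
  assumes n: "2 \<le> n" and t: "t \<in> index_T n"
  shows
      "(\<forall>v. v \<notin> grid_V n \<longrightarrow> muT n t v = 0) \<and>
      meas (muT n t) (grid_V n) = 0 \<and>
      diam (supp (muT n t)) \<le> (1/2) * 2 ^ (n - length t) \<and>
      (\<forall>t'\<in>index_T n - {t}.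
         setdist (supp (muT n t)) (supp (muT n t')) \<ge> (1/4) * 2 ^ (n - max (length t) (length t'))) \<and>
      tc_norm n (muT n t) \<ge> (1/16) * (1/4) ^ length t \<and>
      (\<forall>A. A \<subseteq> grid_V n \<longrightarrow>
         \<bar>meas (muT n t) A\<bar> \<le> 1 * min ((1/2) ^ (n + 1 + length t)) ((1/4) ^ n * (diam A + 1))) \<and>
      (\<exists>u\<in>grid_V n. induces_connected (supp (muT n t) \<union> {u}))"
proof -
  note i = idx[OF t n]
  define k where "k = length t"
  define p where "p = n - k - 2"
  have npk: "n = k + 2 + p" using i unfolding p_def k_def by simp
  define c :: real where "c = (1/4)^n"
  define q where "q = qq n t"
  define X where "X = Xc n t"
  define lo where "lo = loc n t"
  have q1: "1 \<le> q" using qq_facts[OF i(2)] unfolding q_def by simp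
  have qr: "real_of_int q = 2 ^ p" using qq_facts[OF i(2)] unfolding q_def p_def k_def by simp
  have c0: "0 < c" unfolding c_def by simp
  have mu: "muT n t = museg c X lo q" unfolding muT_def c_def X_def lo_def q_def ..
  have seg: "Seg n t = {X} \<times> {lo..<lo+2*q}" unfolding Seg_def X_def lo_def q_def ..
  have sg: "{X} \<times> {lo..<lo+2*q} \<subseteq> grid_V n" using seg_grid[OF t n] seg by simp
  have supp: "supp (muT n t) = {X} \<times> {lo..<lo+2*q}" using supp_muT[of n t] q1 seg unfolding q_def by simp
  have fing: "finite (grid_V n)" unfolding grid_V_def by simp
  define S1 where "S1 = {X} \<times> {lo..<lo+q}"
  define S2 where "S2 = {X} \<times> {lo+q..<lo+2*q}"
  have S12: "S1 \<subseteq> grid_V n" "S2 \<subseteq> grid_V n" using sg q1 unfolding S1_def S2_def by (auto simp: subset_iff)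
  have e2: "lo + 2 * q = (lo + q) + q" by simp
  have cS: "card S1 = nat q" "card S2 = nat q" unfolding S1_def S2_def e2 by (rule card_seg)+
  have measA: "meas (muT n t) A = c * (real (card (A \<inter> S1)) - real (card (A \<inter> S2)))" if "finite A" for A
    unfolding mu museg_def S1_def S2_def by (rule meas_if[OF that])
  have P0: "\<forall>v. v \<notin> grid_V n \<longrightarrow> muT n t v = 0"
    using supp sg unfolding supp_def by blast
  have P1: "meas (muT n t) (grid_V n) = 0"
    using measA[OF fing] S12 cS by (simp add: Int_absorb1)
  have P2: "diam (supp (muT n t)) \<le> (1/2) * 2 ^ (n - length t)"
  proof -
    have "diam (supp (muT n t)) \<le> 2 * real_of_int q"
      unfolding supp
    proof (rule diam_le)
      show "finite ({X} \<times> {lo..<lo + 2 * q})" by simp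
      show "0 \<le> 2 * real_of_int q" using q1 by simp
      show "\<forall>x\<in>{X} \<times> {lo..<lo + 2 * q}. \<forall>y\<in>{X} \<times> {lo..<lo + 2 * q}. l1 x y \<le> 2 * real_of_int q"
        unfolding l1_def by auto
    qed
    also have "\<dots> \<le> (1/2) * 2 ^ (n - length t)"
      using arith3[of p] unfolding qr k_def[symmetric] npk by simp
    finally show ?thesis .
  qed
  have P3: "\<forall>t'\<in>index_T n - {t}.
         setdist (supp (muT n t)) (supp (muT n t')) \<ge> (1/4) * 2 ^ (n - max (length t) (length t'))"
  proof
    fix t' assume t'': "t' \<in> index_T n - {t}"
    then have t': "t' \<in> index_T n" and ne: "t \<noteq> t'" by auto
    have q1': "1 \<le> qq n t'" using qq_facts[OF idx(2)[OF t' n]] by simp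
    show "setdist (supp (muT n t)) (supp (muT n t')) \<ge> (1/4) * 2 ^ (n - max (length t) (length t'))"
      unfolding supp_muT[OF q1'] supp_muT[of n t, OF q1[unfolded q_def]]
    proof (rule setdist_ge)
      show "finite (Seg n t)" "finite (Seg n t')" unfolding Seg_def by simp_all
      show "Seg n t \<noteq> {}" using q1 unfolding Seg_def q_def by simp
      show "Seg n t' \<noteq> {}" using q1' unfolding Seg_def by simp
      show "\<forall>x\<in>Seg n t. \<forall>y\<in>Seg n t'. 1 / 4 * 2 ^ (n - max (length t) (length t')) \<le> l1 x y"
        using sep_real[OF t t' n ne] by blast
    qed
  qed
  have P4: "tc_norm n (muT n t) \<ge> (1/16) * (1/4) ^ length t"
  proof -
    have "(\<Sum>v\<in>grid_V n. muT n t v * real_of_int (- snd v)) \<le> tc_norm n (muT n t)"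
      by (rule tc_lower, unfold mu, rule museg_repr) (use c0 q1 sg in auto)
    moreover have "(\<Sum>v\<in>grid_V n. muT n t v * real_of_int (- snd v)) = c * real_of_int (q * q)"
      unfolding mu by (rule museg_sum) (use q1 sg fing in auto)
    moreover have "c * real_of_int (q * q) = (1/16) * (1/4) ^ length t"
      using arith1[of k p] unfolding c_def qr npk k_def[symmetric] by (simp add: qr mult.assoc)
    ultimately show ?thesis by simp
  qed
  have P5: "\<forall>A. A \<subseteq> grid_V n \<longrightarrow>
         \<bar>meas (muT n t) A\<bar> \<le> 1 * min ((1/2) ^ (n + 1 + length t)) ((1/4) ^ n * (diam A + 1))"
  proof (intro allI impI)
    fix A assume A: "A \<subseteq> grid_V n"
    have fA: "finite A" using A fing finite_subset by blast
    define c1 where "c1 = real (card (A \<inter> S1))"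
    define c2 where "c2 = real (card (A \<inter> S2))"
    have c1q: "c1 \<le> real_of_int q" "c2 \<le> real_of_int q"
    proof -
      have "card (A \<inter> S1) \<le> card S1" "card (A \<inter> S2) \<le> card S2"
        unfolding S1_def S2_def by (intro card_mono; simp)+
      then show "c1 \<le> real_of_int q" "c2 \<le> real_of_int q" unfolding c1_def c2_def using cS q1 by simp_all
    qed
    have c1d: "c1 \<le> diam A + 1" "c2 \<le> diam A + 1"
      unfolding c1_def c2_def
      by (rule card_line_le[OF fA, of _ X]; auto simp: S1_def S2_def)+
    have c12: "0 \<le> c1" "0 \<le> c2" unfolding c1_def c2_def by simp_all
    have "\<bar>meas (muT n t) A\<bar> = c * \<bar>c1 - c2\<bar>" unfolding measA[OF fA] c1_def c2_def
      using c0 by (simp add: abs_mult)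
    moreover have "\<bar>c1 - c2\<bar> \<le> real_of_int q" "\<bar>c1 - c2\<bar> \<le> diam A + 1" using c1q c1d c12 by auto
    ultimately have b1: "\<bar>meas (muT n t) A\<bar> \<le> c * real_of_int q"
      and b2: "\<bar>meas (muT n t) A\<bar> \<le> c * (diam A + 1)"
      using c0 by (simp_all add: mult_left_mono)
    have "c * real_of_int q \<le> (1/2) ^ (n + 1 + length t)"
      using arith2[of k p] unfolding c_def qr k_def[symmetric] npk by simp
    then show "\<bar>meas (muT n t) A\<bar> \<le> 1 * min ((1/2) ^ (n + 1 + length t)) ((1/4) ^ n * (diam A + 1))"
      using b1 b2 unfolding c_def by simp
  qed
  have P6: "\<exists>u\<in>grid_V n. induces_connected (supp (muT n t) \<union> {u})"
  proof
    show "(X, lo) \<in> grid_V n" using sg q1 by auto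
    have "supp (muT n t) \<union> {(X, lo)} = {X} \<times> {lo..<lo+2*q}" unfolding supp using q1 by auto
    then show "induces_connected (supp (muT n t) \<union> {(X, lo)})" using conn_seg by simp
  qed
  show ?thesis using P0 P1 P2 P3 P4 P5 P6 by blast
qed


theorem theorem3p1:
  fixes n :: nat
  assumes "n \<ge> 2"
  shows "\<exists>mu :: nat list \<Rightarrow> vert \<Rightarrow> real.
    \<forall>t\<in>index_T n.
      (\<forall>v. v \<notin> grid_V n \<longrightarrow> mu t v = 0) \<and>
      meas (mu t) (grid_V n) = 0 \<and>
      diam (supp (mu t)) \<le> (1/2) * 2 ^ (n - length t) \<and>
      (\<forall>t'\<in>index_T n - {t}.
         setdist (supp (mu t)) (supp (mu t')) \<ge> (1/4) * 2 ^ (n - max (length t) (length t'))) \<and>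
      tc_norm n (mu t) \<ge> (1/16) * (1/4) ^ length t \<and>
      (\<forall>A. A \<subseteq> grid_V n \<longrightarrow>
         \<bar>meas (mu t) A\<bar> \<le> 1 * min ((1/2) ^ (n + 1 + length t)) ((1/4) ^ n * (diam A + 1))) \<and>
      (\<exists>u\<in>grid_V n. induces_connected (supp (mu t) \<union> {u}))"
  proof -
  show ?thesis
    by (rule exI[of _ "muT n"], intro ballI, rule main_t[OF assms])
qed

end
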